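(* Consider the problems LGopt and QEPmin defined in the context. (1) Let $(\lambda_*,u_* )$ be a minimizer of LGopt. Then there exists $z_*$ such that $(\lambda_*,z_* )$ is a minimizer of QEPmin; specifically, one may take $z_*=(PAP-\lambda_* I)^{\dagger}u_*$ if either $\lambda_*\notin\operatorname{eig}(PAP)$, or $\lambda_*\in\operatorname{eig}(PAP)$ but there is no corresponding eigenvector of $PAP$ lying in $\mathcal N(C^{\top})$; and $z_*=s$ if $\lambda_*\in\operatorname{eig}(PAP)$ and $s\in\mathcal N(C^{\top})$ is a corresponding eigenvector of $PAP$. (2) Let $(\lambda_*,z_* )$ be a minimizer of QEPmin. Then there exists $u_*\in\mathbb{R}^n$ such that $(\lambda_*,u_* )$ is a minimizer of LGopt; specifically, $u_*=-\frac{\gamma^2}{b_0^{\top}z_*}(PAP-\lambda_* I)z_*$ if $b_0^{\top}z_*\neq 0$, and $u_*=x_*+\sqrt{\gamma^2-\|x_*\|^2}\,\frac{z_*}{\|z_*\|}$ if $b_0^{\top}z_*=0$, where in the latter case $x_*=-(PAP-\lambda_* I)^{\dagger}b_0$, and it is guaranteed that $\|x_*\|\le\gamma$.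
   Context: Let $A\in\mathbb{R}^{n\times n}$ be symmetric, $C\in\mathbb{R}^{n\times m}$ ($m<n$) have full column rank, and $b\in\mathbb{R}^m$. Let $n_0=(C^{\top})^{\dagger}b=C(C^{\top}C)^{-1}b$; assume $\|n_0\|<1$ and set $\gamma=\sqrt{1-\|n_0\|^2}>0$. Let $P=I-C(C^{\top}C)^{-1}C^{\top}$ (the orthogonal projector onto the null space $\mathcal N(C^{\top})$) and $b_0=PAn_0$; assume $b_0\neq 0$. $X^\dagger$ is the Moore–Penrose inverse, $\operatorname{eig}(\cdot)$ the set of eigenvalues, norms are Euclidean. LGopt: minimize $\lambda$ over pairs $(\lambda,u)\in\mathbb{R}\times\mathbb{R}^n$ satisfying $(PAP-\lambda I)u=-b_0$, $\|u\|=\gamma$, $u\in\mathcal N(C^{\top})$; a minimizer is a feasible pair with the smallest $\lambda$. QEPmin: minimize $\lambda$ over pairs $(\lambda,z)$ with $\lambda\in\mathbb{R}$, $0\neq z\in\mathcal N(C^{\top})$ and $(PAP-\lambda I)^2z=\gamma^{-2}b_0b_0^{\top}z$; a minimizer is a feasible pair with the smallest $\lambda$. *)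

theory Defs
  imports "HOL-Analysis.Analysis"
begin

definition mp_pinv :: "real^'m^'n \<Rightarrow> real^'n^'m" where
  "mp_pinv X = (THE Y. X ** Y ** X = X \<and> Y ** X ** Y = Y \<and>
       transpose (X ** Y) = X ** Y \<and> transpose (Y ** X) = Y ** X)"

definition eig :: "real^'n^'n \<Rightarrow> real set" where
  "eig M = {lam. \<exists>v. v \<noteq> 0 \<and> M *v v = lam *\<^sub>R v}"

definition nullT :: "real^'m^'n \<Rightarrow> (real^'n) set" where
  "nullT C = {x. transpose C *v x = 0}"

definition nvec :: "real^'m^'n \<Rightarrow> real^'m \<Rightarrow> real^'n" where
  "nvec C b = C *v (matrix_inv (transpose C ** C) *v b)"

definition gam :: "real^'m^'n \<Rightarrow> real^'m \<Rightarrow> real" where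
  "gam C b = sqrt (1 - (norm (nvec C b))\<^sup>2)"

definition projP :: "real^'m^'n \<Rightarrow> real^'n^'n" where
  "projP C = mat 1 - C ** matrix_inv (transpose C ** C) ** transpose C"

definition bvec :: "real^'n^'n \<Rightarrow> real^'m^'n \<Rightarrow> real^'m \<Rightarrow> real^'n" where
  "bvec A C b = projP C *v (A *v nvec C b)"

definition PAP :: "real^'n^'n \<Rightarrow> real^'m^'n \<Rightarrow> real^'n^'n" where
  "PAP A C = projP C ** A ** projP C"

definition LG_feasible :: "real^'n^'n \<Rightarrow> real^'m^'n \<Rightarrow> real^'m \<Rightarrow> real \<Rightarrow> real^'n \<Rightarrow> bool" where
  "LG_feasible A C b lam u \<longleftrightarrow>
     (PAP A C - mat lam) *v u = - bvec A C b \<and> norm u = gam C b \<and> u \<in> nullT C"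

definition LG_min :: "real^'n^'n \<Rightarrow> real^'m^'n \<Rightarrow> real^'m \<Rightarrow> real \<Rightarrow> real^'n \<Rightarrow> bool" where
  "LG_min A C b lam u \<longleftrightarrow> LG_feasible A C b lam u \<and>
     (\<forall>lam' u'. LG_feasible A C b lam' u' \<longrightarrow> lam \<le> lam')"

definition QEP_feasible :: "real^'n^'n \<Rightarrow> real^'m^'n \<Rightarrow> real^'m \<Rightarrow> real \<Rightarrow> real^'n \<Rightarrow> bool" where
  "QEP_feasible A C b lam z \<longleftrightarrow> z \<noteq> 0 \<and> z \<in> nullT C \<and>
     ((PAP A C - mat lam) ** (PAP A C - mat lam)) *v z
       = inverse ((gam C b)\<^sup>2) *\<^sub>R ((bvec A C b \<bullet> z) *\<^sub>R bvec A C b)"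

definition QEP_min :: "real^'n^'n \<Rightarrow> real^'m^'n \<Rightarrow> real^'m \<Rightarrow> real \<Rightarrow> real^'n \<Rightarrow> bool" where
  "QEP_min A C b lam z \<longleftrightarrow> QEP_feasible A C b lam z \<and>
     (\<forall>lam' z'. QEP_feasible A C b lam' z' \<longrightarrow> lam \<le> lam')"

end

theory Submission
  imports Defs
begin


lemma mat_mult_vec: "(mat c :: real^'n^'n) *v x = c *\<^sub>R x"
proof -
  have e: "(if P then a else 0) * b = (if P then a * b else (0::real))" for P a b by simp
  show ?thesis by (simp add: vec_eq_iff matrix_vector_mult_def mat_def e sum.delta)
qed

lemma mvneg: "(A::real^'n^'m) *v (- x) = - (A *v x)"
  by (metis add.inverse_unique matrix_vector_right_distrib matrix_vector_mult_0_right neg_eq_iff_add_eq_0)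

lemma sym_inner:
  fixes S :: "real^'n^'n"
  assumes "transpose S = S"
  shows "x \<bullet> (S *v y) = (S *v x) \<bullet> y"
  by (metis assms dot_lmul_matrix transpose_matrix_vector inner_commute)

lemma inner_sym:
  fixes S :: "real^'n^'n"
  assumes "\<And>x y. x \<bullet> (S *v y) = (S *v x) \<bullet> y"
  shows "transpose S = S"
proof -
  have "transpose S *v x = S *v x" for x
  proof -
    have "(transpose S *v x - S *v x) \<bullet> y = 0" for y
      using assms[of x y] dot_lmul_matrix[of x S y]
      by (simp add: inner_diff_left inner_diff_right inner_commute)
    from this[of "transpose S *v x - S *v x"] show ?thesis by simp
  qed
  then show ?thesis by (simp add: matrix_eq)
qed

lemma pinv_unique:
  fixes X :: "real^'n^'n"
  assumes "X ** Y1 ** X = X" "Y1 ** X ** Y1 = Y1" "transpose (X ** Y1) = X ** Y1" "transpose (Y1 ** X) = Y1 ** X"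
    and "X ** Y2 ** X = X" "Y2 ** X ** Y2 = Y2" "transpose (X ** Y2) = X ** Y2" "transpose (Y2 ** X) = Y2 ** X"
  shows "Y1 = Y2"
proof -
  have a: "Y1 = Y1 ** X ** Y2"
  proof -
    have "Y1 = Y1 ** transpose (X ** Y1)" using assms by (metis matrix_mul_assoc)
    also have "\<dots> = Y1 ** transpose Y1 ** transpose X" by (simp add: matrix_transpose_mul matrix_mul_assoc)
    also have "transpose X = transpose X ** transpose Y2 ** transpose X"
      using assms(5) by (metis matrix_transpose_mul matrix_mul_assoc)
    also have "Y1 ** transpose Y1 ** (transpose X ** transpose Y2 ** transpose X)
       = Y1 ** transpose (X ** Y1) ** transpose (X ** Y2)"
      by (simp add: matrix_transpose_mul matrix_mul_assoc)
    also have "\<dots> = Y1 ** X ** Y1 ** X ** Y2" using assms by (simp add: matrix_mul_assoc)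
    also have "\<dots> = Y1 ** X ** Y2" using assms(2) by simp
    finally show ?thesis .
  qed
  have b: "Y2 = Y1 ** X ** Y2"
  proof -
    have "Y2 = transpose (Y2 ** X) ** Y2" using assms by (metis matrix_mul_assoc)
    also have "\<dots> = transpose X ** transpose Y2 ** Y2" by (simp add: matrix_transpose_mul matrix_mul_assoc)
    also have "transpose X = transpose X ** transpose Y1 ** transpose X"
      using assms(1) by (metis matrix_transpose_mul matrix_mul_assoc)
    also have "(transpose X ** transpose Y1 ** transpose X) ** transpose Y2 ** Y2
       = transpose (Y1 ** X) ** transpose (Y2 ** X) ** Y2"
      by (simp add: matrix_transpose_mul matrix_mul_assoc)
    also have "\<dots> = Y1 ** X ** Y2 ** X ** Y2" using assms by (simp add: matrix_mul_assoc)
    also have "\<dots> = Y1 ** X ** Y2" using assms(6) by (metis matrix_mul_assoc)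
    finally show ?thesis .
  qed
  from a b show ?thesis by simp
qed

lemma proj_ker_exists:
  fixes X :: "real^'n^'n"
  obtains Q where "transpose Q = Q" "\<And>x. X *v (Q *v x) = 0" "\<And>x. X *v x = 0 \<Longrightarrow> Q *v x = x"
proof -
  let ?K = "{x. X *v x = 0}"
  have sK: "subspace ?K"
    by (rule linear_subspace_kernel) simp
  obtain T where T: "0 \<notin> T" "T \<subseteq> ?K" "pairwise orthogonal T" "span T = ?K"
    using orthogonal_basis_subspace[OF sK] by metis
  define q where "q x = (\<Sum>b\<in>T. (b \<bullet> x / (b \<bullet> b)) *\<^sub>R b)" for x
  have bl: "bounded_linear q"
    proof -
    have "bounded_linear (\<lambda>x. b \<bullet> x / (b \<bullet> b))" for b
      by (rule bounded_linear_compose[OF bounded_linear_divide bounded_linear_inner_right])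
    then have "bounded_linear (\<lambda>x. (b \<bullet> x / (b \<bullet> b)) *\<^sub>R b)" for b
      by (rule bounded_linear_compose[OF bounded_linear_scaleR_left])
    then show ?thesis unfolding q_def
      by (rule bounded_linear_sum)
  qed
  define Q where "Q = matrix q"
  have Qq: "Q *v x = q x" for x
    using matrix_vector_mul(3)[OF bl] unfolding Q_def by metis
  have qK: "q x \<in> ?K" for x
  proof -
    have "q x \<in> span T" unfolding q_def
      by (intro span_sum span_mul span_base) 
    then show ?thesis using T by simp
  qed
  have orth: "(x - q x) \<bullet> w = 0" if "w \<in> ?K" for x w
    using Gram_Schmidt_step[OF T(3), of w x] that T(4)
    unfolding q_def orthogonal_def by (simp add: inner_commute)
  have fixq: "q x = x" if "X *v x = 0" for x
  proof -
    have "x - q x \<in> ?K" using that qK[of x] by (simp add: matrix_vector_mult_diff_distrib)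
    then have "(x - q x) \<bullet> (x - q x) = 0" using orth by blast
    then show ?thesis by simp
  qed
  have symq: "x \<bullet> q y = q x \<bullet> y" for x y
  proof -
    have "x \<bullet> q y = q x \<bullet> q y + (x - q x) \<bullet> q y" by (simp add: inner_diff_left)
    also have "\<dots> = q x \<bullet> q y" using orth qK by simp
    also have "\<dots> = q x \<bullet> y - q x \<bullet> (y - q y)" by (simp add: inner_diff_right)
    also have "\<dots> = q x \<bullet> y" using orth[of "q x" y] qK[of x] by (simp add: inner_commute)
    finally show ?thesis .
  qed
  show ?thesis
  proof
    show "transpose Q = Q" by (rule inner_sym) (simp add: Qq symq)
    show "X *v (Q *v x) = 0" for x using qK Qq by simp
    show "Q *v x = x" if "X *v x = 0" for x using fixq that Qq by simp
  qed
qed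

lemma pinv_exists_sym:
  fixes X :: "real^'n^'n"
  assumes sX: "transpose X = X"
  shows "\<exists>Y. X ** Y ** X = X \<and> Y ** X ** Y = Y \<and> transpose (X ** Y) = X ** Y \<and> transpose (Y ** X) = Y ** X"
proof -
  obtain Q where sQ: "transpose Q = Q" and XQ: "\<And>x. X *v (Q *v x) = 0"
    and Qfix: "\<And>x. X *v x = 0 \<Longrightarrow> Q *v x = x"
    using proj_ker_exists by blast
  have QX: "Q *v (X *v v) = 0" for v
  proof -
    have "(Q *v (X *v v)) \<bullet> w = 0" for w
      using sym_inner[OF sQ, of "X *v v" w] sym_inner[OF sX, of v "Q *v w"] XQ[of w]
      by (simp add: inner_commute)
    from this[of "Q *v (X *v v)"] show ?thesis by simp
  qed
  have QQ: "Q *v (Q *v v) = Q *v v" for v using Qfix XQ by blast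
  define Z where "Z = X + Q"
  have Zv: "Z *v v = X *v v + Q *v v" for v by (simp add: Z_def matrix_vector_mult_add_rdistrib)
  have "\<forall>v. Z *v v = 0 \<longrightarrow> v = 0"
  proof (intro allI impI)
    fix v assume "Z *v v = 0"
    then have "Q *v (X *v v + Q *v v) = 0" by (simp add: Zv)
    then have "Q *v v = 0" by (simp add: matrix_vector_right_distrib QX QQ)
    with \<open>Z *v v = 0\<close> have "X *v v = 0" by (simp add: Zv)
    then show "v = 0" using Qfix \<open>Q *v v = 0\<close> by metis
  qed
  then obtain B where "B ** Z = mat 1" using matrix_left_invertible_ker by blast
  then have "invertible Z" using invertible_left_inverse by blast
  then have "Z ** matrix_inv Z = mat 1 \<and> matrix_inv Z ** Z = mat 1"
    unfolding invertible_def matrix_inv_def by (rule someI_ex)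
  then have ZW: "Z *v (matrix_inv Z *v v) = v" and WZ: "matrix_inv Z *v (Z *v v) = v" for v
    by (metis matrix_vector_mul_assoc matrix_vector_mul_lid)+
  define W where "W = matrix_inv Z"
  have WQ: "W *v (Q *v v) = Q *v v" for v
    using WZ[of "Q *v v"] by (simp add: Zv XQ QQ W_def)
  have QW: "Q *v (W *v v) = Q *v v" for v
  proof -
    have "Q *v v = Q *v (Z *v (W *v v))" using ZW W_def by simp
    also have "\<dots> = Q *v (W *v v)" by (simp add: Zv matrix_vector_right_distrib QX QQ)
    finally show ?thesis by simp
  qed
  define Y where "Y = W - Q"
  have Yv: "Y *v v = W *v v - Q *v v" for v by (simp add: Y_def matrix_vector_mult_diff_rdistrib)
  have XY: "X *v (Y *v v) = v - Q *v v" for v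
  proof -
    have "X *v (W *v v) = Z *v (W *v v) - Q *v (W *v v)" by (simp add: Zv)
    then show ?thesis using ZW QW XQ by (simp add: Yv matrix_vector_mult_diff_distrib W_def)
  qed
  have YX: "Y *v (X *v v) = v - Q *v v" for v
  proof -
    have "W *v (X *v v) = W *v (Z *v v) - W *v (Q *v v)"
      by (simp add: Zv matrix_vector_right_distrib)
    then show ?thesis using WZ WQ QX by (simp add: Yv W_def)
  qed
  have symIQ: "x \<bullet> (y - Q *v y) = (x - Q *v x) \<bullet> y" for x y
    using sym_inner[OF sQ, of x y] by (simp add: inner_diff_left inner_diff_right)
  have "X ** Y ** X = X"
    by (simp add: matrix_eq matrix_vector_mul_assoc[symmetric] XY QX)
  moreover have "Y ** X ** Y = Y"
  proof -
    have "Q *v (Y *v v) = 0" for v by (simp add: Yv matrix_vector_mult_diff_distrib QW QQ)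
    then show ?thesis by (simp add: matrix_eq matrix_vector_mul_assoc[symmetric] YX)
  qed
  moreover have "transpose (X ** Y) = X ** Y"
    by (rule inner_sym) (simp add: matrix_vector_mul_assoc[symmetric] XY symIQ)
  moreover have "transpose (Y ** X) = Y ** X"
    by (rule inner_sym) (simp add: matrix_vector_mul_assoc[symmetric] YX symIQ)
  ultimately show ?thesis by blast
qed

lemma mp_pinv_props:
  fixes X :: "real^'n^'n"
  assumes sX: "transpose X = X"
  shows "X ** mp_pinv X ** X = X \<and> mp_pinv X ** X ** mp_pinv X = mp_pinv X \<and>
     transpose (X ** mp_pinv X) = X ** mp_pinv X \<and> transpose (mp_pinv X ** X) = mp_pinv X ** X"
proof -
  have "\<exists>!Y. X ** Y ** X = X \<and> Y ** X ** Y = Y \<and> transpose (X ** Y) = X ** Y \<and> transpose (Y ** X) = Y ** X"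
    using pinv_exists_sym[OF sX] pinv_unique by blast
  then show ?thesis unfolding mp_pinv_def by (rule theI')
qed

lemma pinv_vec:
  fixes X :: "real^'n^'n"
  assumes sX: "transpose X = X"
  shows "X *v (mp_pinv X *v (X *v w)) = X *v w"
    and "X *v k = 0 \<Longrightarrow> (mp_pinv X *v b) \<bullet> k = 0"
    and "X *v (b - X *v (mp_pinv X *v b)) = 0"
proof -
  let ?Y = "mp_pinv X"
  note pp = mp_pinv_props[OF sX]
  show "X *v (?Y *v (X *v w)) = X *v w"
    using pp by (metis matrix_vector_mul_assoc)
  show "(?Y *v b) \<bullet> k = 0" if "X *v k = 0"
  proof -
    have "?Y *v b = (?Y ** X) *v (?Y *v b)" using pp by (metis matrix_vector_mul_assoc)
    then have "(?Y *v b) \<bullet> k = ((?Y ** X) *v (?Y *v b)) \<bullet> k" by simp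
    also have "\<dots> = (?Y *v b) \<bullet> ((?Y ** X) *v k)"
      using sym_inner[of "?Y ** X" "?Y *v b" k] pp by simp
    also have "\<dots> = 0" using that by (simp add: matrix_vector_mul_assoc[symmetric])
    finally show ?thesis .
  qed
  show "X *v (b - X *v (?Y *v b)) = 0"
  proof -
    let ?k = "b - X *v (?Y *v b)"
    have orth: "?k \<bullet> (X *v w) = 0" for w
    proof -
      have "(X *v (?Y *v b)) \<bullet> (X *v w) = ((X ** ?Y) *v b) \<bullet> (X *v w)"
        by (simp add: matrix_vector_mul_assoc)
      also have "\<dots> = b \<bullet> ((X ** ?Y) *v (X *v w))"
        using sym_inner[of "X ** ?Y" b "X *v w"] pp by simp
      also have "\<dots> = b \<bullet> (X *v w)" using pp by (metis matrix_vector_mul_assoc)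
      finally show ?thesis by (simp add: inner_diff_left)
    qed
    have "(X *v ?k) \<bullet> (X *v ?k) = 0"
      using orth[of "X *v ?k"] sym_inner[OF sX, of ?k "X *v ?k"] by simp
    then show ?thesis by simp
  qed
qed

lemma poly_nonneg_lin0:
  fixes a b c d :: real
  assumes H: "\<And>t. a * t + b * t^2 + c * t^3 + d * t^4 \<ge> 0"
  shows "a = 0"
proof (rule ccontr)
  assume a0: "a \<noteq> 0"
  define R where "R = \<bar>b\<bar> + \<bar>c\<bar> * \<bar>a\<bar> + \<bar>d\<bar> * a^2"
  define K where "K = 1 + 2 * R"
  have R0: "R \<ge> 0" unfolding R_def by simp
  have K1: "K \<ge> 1" unfolding K_def using R0 by simp
  define t where "t = - a / K"
  have ta: "\<bar>t\<bar> \<le> \<bar>a\<bar>" unfolding t_def using K1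
    by (simp add: abs_div divide_le_eq_1 mult_le_cancel_left1 divide_le_eq) 
  have tK: "\<bar>t\<bar> * K = \<bar>a\<bar>" unfolding t_def using K1 by (simp add: abs_div)
  define e where "e = t * (b + c * t + d * t^2)"
  have "\<bar>b + c * t + d * t^2\<bar> \<le> R"
  proof -
    have "\<bar>c * t\<bar> \<le> \<bar>c\<bar> * \<bar>a\<bar>" using ta by (simp add: abs_mult mult_left_mono)
    moreover have "\<bar>d * t^2\<bar> \<le> \<bar>d\<bar> * a^2"
    proof -
      have "t^2 \<le> a^2" using ta by (metis abs_le_square_iff)
      then show ?thesis by (simp add: abs_mult mult_left_mono)
    qed
    ultimately show ?thesis unfolding R_def by (smt (verit) abs_triangle_ineq)
  qed
  then have "\<bar>e\<bar> \<le> \<bar>t\<bar> * R" unfolding e_def by (simp add: abs_mult mult_left_mono)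
  also have "\<bar>t\<bar> * R \<le> \<bar>a\<bar> / 2"
  proof -
    have "\<bar>t\<bar> * (2 * R) \<le> \<bar>t\<bar> * K" unfolding K_def by (simp add: mult_left_mono)
    then show ?thesis using tK by linarith
  qed
  finally have ea: "\<bar>e\<bar> \<le> \<bar>a\<bar> / 2" .
  have "a * (a + e) > 0"
  proof -
    have "a * e \<ge> - (\<bar>a\<bar> * \<bar>e\<bar>)" by (simp add: abs_mult[symmetric] abs_ge_minus_self)
    moreover have "\<bar>a\<bar> * \<bar>e\<bar> \<le> \<bar>a\<bar> * (\<bar>a\<bar> / 2)" using ea by (intro mult_left_mono) auto
    moreover have "\<bar>a\<bar> * \<bar>a\<bar> = a * a" by (simp add: abs_mult_self_eq)
    moreover have "a * a > 0" using a0 by (simp add: zero_less_mult_iff linorder_neq_iff) blast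
    ultimately show ?thesis by (simp add: distrib_left)
  qed
  moreover have "a * t + b * t^2 + c * t^3 + d * t^4 = t * (a + e)"
    unfolding e_def by (simp add: power2_eq_square power3_eq_cube power4_eq_xxxx algebra_simps)
  moreover have "t * (a + e) = - (a * (a + e)) / K" unfolding t_def by simp
  ultimately have "a * t + b * t^2 + c * t^3 + d * t^4 < 0" using K1
    by (simp add: divide_neg_pos)
  with H[of t] show False by simp
qed



locale trs =
  fixes P M :: "real^'n^'n" and b0 :: "real^'n" and g :: real
  assumes Psym: "transpose P = P" and Pidem: "P ** P = P" and Msym: "transpose M = M"
    and PM: "P ** M = M" and MP: "M ** P = M" and Pb0: "P *v b0 = b0" and b0nz: "b0 \<noteq> 0"
    and gpos: "g > 0"
begin

definition X :: "real \<Rightarrow> real^'n^'n" where "X l = M - mat l"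

definition LGf where "LGf l u \<longleftrightarrow> X l *v u = - b0 \<and> norm u = g \<and> P *v u = u"

definition QEPf where "QEPf l z \<longleftrightarrow> z \<noteq> 0 \<and> P *v z = z \<and>
   (X l ** X l) *v z = inverse (g\<^sup>2) *\<^sub>R ((b0 \<bullet> z) *\<^sub>R b0)"

lemma PP: "P *v (P *v x) = P *v x"
  using Pidem by (metis matrix_vector_mul_assoc)
lemma PMv: "P *v (M *v x) = M *v x"
  using PM by (metis matrix_vector_mul_assoc)
lemma MPv: "M *v (P *v x) = M *v x"
  using MP by (metis matrix_vector_mul_assoc)
lemma Xv: "X l *v x = M *v x - l *\<^sub>R x"
  by (simp add: X_def matrix_vector_mult_diff_rdistrib mat_mult_vec)
lemma Minner: "x \<bullet> (M *v y) = (M *v x) \<bullet> y"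
  by (rule sym_inner[OF Msym])
lemma Pinner: "x \<bullet> (P *v y) = (P *v x) \<bullet> y"
  by (rule sym_inner[OF Psym])
lemma Xinner: "x \<bullet> (X l *v y) = (X l *v x) \<bullet> y"
proof -
  have 1: "x \<bullet> (X l *v y) = x \<bullet> (M *v y) - l * (x \<bullet> y)" by (simp add: Xv inner_diff_right)
  have 2: "(X l *v x) \<bullet> y = (M *v x) \<bullet> y - l * (x \<bullet> y)" by (simp add: Xv inner_diff_left)
  show ?thesis unfolding 1 2 Minner ..
qed
lemma Xsym: "transpose (X l) = X l"
  by (rule inner_sym) (rule Xinner)
lemma XP: "X l *v (P *v x) = P *v (X l *v x)"
proof -
  have "X l *v (P *v x) = M *v x - l *\<^sub>R (P *v x)" by (simp only: Xv MPv)
  moreover have "P *v (X l *v x) = P *v (M *v x) - P *v (l *\<^sub>R x)"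
    by (simp only: Xv matrix_vector_mult_diff_distrib)
  ultimately show ?thesis by (simp only: PMv matrix_vector_mult_scaleR)
qed
lemma XX: "(X l ** X l) *v z = X l *v (X l *v z)"
  by (simp add: matrix_vector_mul_assoc)
lemma Porth: "(P *v x) \<bullet> (x - P *v x) = 0"
proof -
  have "(P *v x) \<bullet> (P *v x) = x \<bullet> (P *v (P *v x))" by (simp only: Pinner)
  also have "\<dots> = (P *v x) \<bullet> x" by (simp only: PP inner_commute)
  finally show ?thesis by (simp only: inner_diff_right)
qed

lemma minnorm:
  assumes "X l *v (P *v y - y) = 0" and "\<And>k. X l *v k = 0 \<Longrightarrow> y \<bullet> k = 0"
  shows "P *v y = y"
proof -
  define k where "k = P *v y - y"
  have yk: "y \<bullet> k = 0" using assms k_def by blast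
  have Py: "P *v y = y + k" by (simp add: k_def)
  have 1: "(P *v y) \<bullet> (P *v y) = y \<bullet> y + k \<bullet> k"
    using yk by (simp add: Py inner_add_left inner_add_right inner_commute)
  have "(P *v y) \<bullet> (y - P *v y) = 0" by (rule Porth)
  then have 2: "y \<bullet> y = (P *v y) \<bullet> (P *v y) + k \<bullet> k"
    using yk by (simp add: Py inner_add_left inner_add_right inner_diff_left inner_diff_right inner_commute)
  from 1 2 have "k \<bullet> k = 0" by simp
  then show ?thesis using k_def by simp
qed

lemma F1:
  assumes Q: "QEPf l z" and bz: "b0 \<bullet> z \<noteq> 0"
  shows "LGf l (- ((g\<^sup>2) / (b0 \<bullet> z)) *\<^sub>R (X l *v z))"
proof -
  define \<beta> where "\<beta> = b0 \<bullet> z"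
  have b: "\<beta> \<noteq> 0" using bz \<beta>_def by simp
  have g2: "g\<^sup>2 \<noteq> 0" using gpos by simp
  have Pz: "P *v z = z" and E: "X l *v (X l *v z) = inverse (g\<^sup>2) *\<^sub>R (\<beta> *\<^sub>R b0)"
    using Q unfolding QEPf_def \<beta>_def by (auto simp: XX)
  define u where "u = - ((g\<^sup>2) / \<beta>) *\<^sub>R (X l *v z)"
  have "X l *v u = - ((g\<^sup>2) / \<beta>) *\<^sub>R (X l *v (X l *v z))"
    by (simp add: u_def matrix_vector_mult_scaleR mvneg)
  also have "\<dots> = - b0" using b g2 by (simp add: E)
  finally have 1: "X l *v u = - b0" .
  have "u \<bullet> u = ((g\<^sup>2) / \<beta>)^2 * ((X l *v z) \<bullet> (X l *v z))"
    by (simp add: u_def power2_eq_square)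
  also have "(X l *v z) \<bullet> (X l *v z) = z \<bullet> (X l *v (X l *v z))" by (simp add: Xinner)
  also have "\<dots> = \<beta> * \<beta> / g\<^sup>2" by (simp add: E \<beta>_def inner_commute field_simps)
  finally have "u \<bullet> u = g\<^sup>2" using b g2 by (simp add: field_simps power2_eq_square)
  then have 2: "norm u = g" using gpos by (simp add: norm_eq_sqrt_inner)
  have 3: "P *v u = u" by (simp add: u_def matrix_vector_mult_scaleR mvneg XP[symmetric] Pz)
  show ?thesis using 1 2 3 unfolding LGf_def u_def \<beta>_def by simp
qed

lemma F2a:
  assumes L: "LGf l u" and s: "s \<noteq> 0" "P *v s = s" "M *v s = l *\<^sub>R s"
  shows "QEPf l s"
proof -
  have Xs: "X l *v s = 0" using s by (simp add: Xv)
  have "b0 \<bullet> s = - ((X l *v u) \<bullet> s)" using L unfolding LGf_def by simp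
  also have "\<dots> = - (u \<bullet> (X l *v s))" by (simp add: Xinner)
  finally have "b0 \<bullet> s = 0" using Xs by simp
  then show ?thesis using s Xs unfolding QEPf_def by (simp add: XX)
qed

lemma F3:
  assumes Q: "QEPf l z" and bz: "b0 \<bullet> z = 0"
  shows "X l *v z = 0"
proof -
  have E: "X l *v (X l *v z) = 0" using Q bz unfolding QEPf_def by (simp add: XX)
  have "(X l *v z) \<bullet> (X l *v z) = z \<bullet> (X l *v (X l *v z))" by (simp add: Xinner)
  then show ?thesis using E by simp
qed

lemma F2b:
  assumes L: "LGf l u" and noeig: "\<not> (\<exists>s. s \<noteq> 0 \<and> P *v s = s \<and> M *v s = l *\<^sub>R s)"
  shows "QEPf l (mp_pinv (X l) *v u)"
proof -
  let ?X = "X l" and ?Y = "mp_pinv (X l)"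
  define z where "z = ?Y *v u"
  have Xu: "?X *v u = - b0" and nu: "norm u = g" and Pu: "P *v u = u" using L unfolding LGf_def by auto
  define k where "k = u - ?X *v z"
  have Xk: "?X *v k = 0" unfolding k_def z_def by (rule pinv_vec(3)[OF Xsym])
  have XPk: "?X *v (P *v k) = 0" by (simp add: XP Xk)
  have Pk: "P *v k = 0"
  proof (rule ccontr)
    assume "P *v k \<noteq> 0"
    moreover have "M *v (P *v k) = l *\<^sub>R (P *v k)" using XPk by (simp add: Xv)
    ultimately show False using noeig PP by blast
  qed
  have "k \<bullet> k = k \<bullet> u - k \<bullet> (?X *v z)" by (simp add: k_def inner_diff_right)
  also have "k \<bullet> (?X *v z) = 0" by (simp add: Xinner Xk)
  also have "k \<bullet> u = k \<bullet> (P *v u)" using Pu by simp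
  also have "\<dots> = 0" by (simp add: Pinner Pk)
  finally have "k = 0" by simp
  then have Xz: "?X *v z = u" by (simp add: k_def)
  have unz: "u \<noteq> 0" using nu gpos by auto
  then have znz: "z \<noteq> 0" using Xz by auto
  have Pz: "P *v z = z"
  proof (rule minnorm[of l])
    show "?X *v (P *v z - z) = 0" by (simp add: matrix_vector_mult_diff_distrib XP Xz Pu)
    show "z \<bullet> k' = 0" if "?X *v k' = 0" for k'
      unfolding z_def by (rule pinv_vec(2)[OF Xsym that])
  qed
  have bz: "b0 \<bullet> z = - g\<^sup>2"
  proof -
    have "b0 \<bullet> z = - ((?X *v u) \<bullet> z)" using Xu by simp
    also have "\<dots> = - (u \<bullet> (?X *v z))" by (simp add: Xinner)
    also have "\<dots> = - (norm u)\<^sup>2" by (simp add: Xz power2_norm_eq_inner)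
    finally show ?thesis using nu by simp
  qed
  have "(?X ** ?X) *v z = - b0" by (simp add: XX Xz Xu)
  moreover have "inverse (g\<^sup>2) *\<^sub>R ((b0 \<bullet> z) *\<^sub>R b0) = - b0" using gpos by (simp add: bz)
  ultimately show ?thesis unfolding QEPf_def z_def[symmetric] using znz Pz by simp
qed

lemma trs_exists:
  obtains l u where "LGf l u" "\<And>\<mu> s. s \<noteq> 0 \<Longrightarrow> P *v s = s \<Longrightarrow> M *v s = \<mu> *\<^sub>R s \<Longrightarrow> l \<le> \<mu>"
proof -
  define f where "f v = (1/2) * (v \<bullet> (M *v v)) + b0 \<bullet> v" for v
  define S where "S = {v. P *v v = v} \<inter> sphere 0 g"
  have cS: "compact S" unfolding S_def
  proof (rule closed_Int_compact)
    show "closed {v. P *v v = v}"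
      by (rule closed_Collect_eq) (intro continuous_intros)+
  qed (rule compact_sphere)
  have neS: "S \<noteq> {}"
  proof -
    have "(g / norm b0) *\<^sub>R b0 \<in> S" using b0nz gpos
      by (simp add: S_def matrix_vector_mult_scaleR Pb0)
    then show ?thesis by blast
  qed
  have cf: "continuous_on S f" unfolding f_def by (intro continuous_intros)
  obtain u where uS: "u \<in> S" and umin: "\<And>y. y \<in> S \<Longrightarrow> f u \<le> f y"
    using continuous_attains_inf[OF cS neS cf] by blast
  have Pu: "P *v u = u" and nu: "norm u = g" using uS by (auto simp: S_def)
  have uu: "u \<bullet> u = g\<^sup>2" using nu power2_norm_eq_inner[of u] by simp
  define gr where "gr = M *v u + b0"
  have Pgr: "P *v gr = gr" by (simp add: gr_def matrix_vector_right_distrib PMv Pb0)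
  have I1: "f v - f u = (1/2) * ((v - u) \<bullet> (M *v (v - u))) + (v - u) \<bullet> gr" for v
  proof -
    have um: "u \<bullet> (M *v v) = v \<bullet> (M *v u)" by (metis Minner inner_commute)
    have "(v - u) \<bullet> (M *v (v - u)) = v \<bullet> (M *v v) - 2 * (v \<bullet> (M *v u)) + u \<bullet> (M *v u)"
      by (simp add: matrix_vector_mult_diff_distrib inner_diff_left inner_diff_right um)
    then show ?thesis
      by (simp add: f_def gr_def inner_diff_left inner_add_right algebra_simps) (metis inner_commute add.commute)
  qed
  have lag: "gr \<bullet> w = 0" if Pw: "P *v w = w" and wu: "w \<bullet> u = 0" for w
  proof (cases "w = 0")
    case True then show ?thesis by simp
  next
    case False
    define w' where "w' = (g / norm w) *\<^sub>R w"
    have nw': "w' \<bullet> w' = g\<^sup>2" using False gpos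
      by (simp add: w'_def power2_norm_eq_inner[symmetric] power2_eq_square)
    have Pw': "P *v w' = w'" by (simp add: w'_def matrix_vector_mult_scaleR Pw)
    have w'u: "w' \<bullet> u = 0" by (simp add: w'_def wu)
    have uw': "u \<bullet> w' = 0" using w'u by (simp add: inner_commute)
    define A where "A = u \<bullet> (M *v u)"
    define B where "B = u \<bullet> (M *v w')"
    define Cc where "Cc = w' \<bullet> (M *v w')"
    have wMu: "w' \<bullet> (M *v u) = B" unfolding B_def by (metis Minner inner_commute)
    have poly: "(2 * (w' \<bullet> gr)) * t + (2 * Cc - 2 * (u \<bullet> gr)) * t^2
        + (2 * (w' \<bullet> gr) - 4 * B) * t^3 + (2 * A - 2 * (u \<bullet> gr)) * t^4 \<ge> 0" for t
    proof -
      define s where "s = 1 + t^2"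
      have s0: "s > 0" unfolding s_def by (simp add: add_pos_nonneg)
      define e where "e = (- 2 * t^2) *\<^sub>R u + (2 * t) *\<^sub>R w'"
      define v where "v = u + (1 / s) *\<^sub>R e"
      have Pv: "P *v v = v"
        by (simp add: v_def e_def matrix_vector_right_distrib matrix_vector_mult_diff_distrib matrix_vector_mult_scaleR Pu Pw')
      have ue: "u \<bullet> e = - 2 * t^2 * g\<^sup>2"
        by (simp add: e_def inner_add_right inner_diff_right uu inner_commute w'u uw')
      have ee: "e \<bullet> e = (4 * t^4 + 4 * t^2) * g\<^sup>2"
        by (simp add: e_def inner_add_left inner_add_right inner_diff_left inner_diff_right uu nw' w'u uw' inner_commute algebra_simps
            power2_eq_square power4_eq_xxxx)
      have "v \<bullet> v = u \<bullet> u + (2 / s) * (u \<bullet> e) + (1 / s)^2 * (e \<bullet> e)"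
        by (simp add: v_def inner_add_left inner_add_right inner_commute power2_eq_square algebra_simps)
      also have "\<dots> = g\<^sup>2"
      proof -
        have "(2 / s) * (- 2 * t^2 * g\<^sup>2) + (1 / s)^2 * ((4 * t^4 + 4 * t^2) * g\<^sup>2) = 0"
        proof -
          have "4 * t^4 + 4 * t^2 = 4 * t^2 * s" unfolding s_def by (simp add: algebra_simps power2_eq_square power4_eq_xxxx)
          then show ?thesis using s0 by (simp add: field_simps power2_eq_square)
        qed
        then show ?thesis by (simp add: uu ue ee)
      qed
      finally have "norm v = g" using gpos by (simp add: norm_eq_sqrt_inner)
      then have "v \<in> S" using Pv by (simp add: S_def)
      then have "0 \<le> f v - f u" using umin by simp
      also have "f v - f u = (1 / s)^2 * ((1/2) * (e \<bullet> (M *v e))) + (1 / s) * (e \<bullet> gr)"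
        unfolding I1 by (simp add: v_def matrix_vector_mult_scaleR power2_eq_square)
      finally have "0 \<le> s^2 * ((1 / s)^2 * ((1/2) * (e \<bullet> (M *v e))) + (1 / s) * (e \<bullet> gr))"
        using s0 by simp
      also have "\<dots> = (1/2) * (e \<bullet> (M *v e)) + s * (e \<bullet> gr)"
        using s0 by (simp add: field_simps power2_eq_square)
      also have "e \<bullet> (M *v e) = 4 * t^4 * A - 8 * t^3 * B + 4 * t^2 * Cc"
        by (simp add: e_def matrix_vector_right_distrib matrix_vector_mult_diff_distrib matrix_vector_mult_scaleR inner_add_left
            inner_add_right inner_diff_left inner_diff_right wMu A_def[symmetric] B_def[symmetric] Cc_def[symmetric] algebra_simps
            power2_eq_square power3_eq_cube power4_eq_xxxx)
      also have "e \<bullet> gr = - 2 * t^2 * (u \<bullet> gr) + 2 * t * (w' \<bullet> gr)"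
        by (simp add: e_def inner_add_left inner_diff_left)
      finally show ?thesis unfolding s_def
        by (simp add: algebra_simps power2_eq_square power3_eq_cube power4_eq_xxxx)
    qed
    have "2 * (w' \<bullet> gr) = 0" by (rule poly_nonneg_lin0[OF poly])
    then have "(g / norm w) * (gr \<bullet> w) = 0" by (simp add: w'_def inner_commute)
    then show ?thesis using gpos False by simp
  qed
  define l where "l = (gr \<bullet> u) / g\<^sup>2"
  have grl: "gr = l *\<^sub>R u"
  proof -
    define r where "r = gr - l *\<^sub>R u"
    have Pr: "P *v r = r" by (simp add: r_def matrix_vector_mult_diff_distrib matrix_vector_mult_scaleR Pgr Pu)
    have ru: "r \<bullet> u = 0" using gpos by (simp add: r_def inner_diff_left uu l_def)
    have "r \<bullet> r = gr \<bullet> r - l * (u \<bullet> r)" by (simp add: r_def inner_diff_left)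
    also have "\<dots> = 0" using lag[OF Pr ru] ru by (simp add: inner_commute)
    finally show ?thesis by (simp add: r_def)
  qed
  have LG: "LGf l u"
  proof -
    have "X l *v u = M *v u - l *\<^sub>R u" by (simp add: Xv)
    also have "\<dots> = - b0" using grl by (simp add: gr_def algebra_simps)
    finally show ?thesis unfolding LGf_def using nu Pu by simp
  qed
  have I2: "f v - f u = (1/2) * ((v - u) \<bullet> (M *v (v - u)) - l * ((v - u) \<bullet> (v - u)))"
    if "v \<in> S" for v
  proof -
    define e where "e = v - u"
    have "v \<bullet> v = g\<^sup>2" using that by (simp add: S_def power2_norm_eq_inner[symmetric])
    then have "(u + e) \<bullet> (u + e) = u \<bullet> u" by (simp add: e_def uu)
    then have eu: "e \<bullet> u = - (1/2) * (e \<bullet> e)"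
      by (simp add: inner_add_left inner_add_right inner_commute)
    show ?thesis using I1[of v] unfolding e_def[symmetric] grl
      by (simp add: eu algebra_simps)
  qed
  have q_nonneg: "d \<bullet> (M *v d) - l * (d \<bullet> d) \<ge> 0" if Pd: "P *v d = d" and du: "d \<bullet> u \<noteq> 0" for d
  proof -
    have dd: "d \<bullet> d > 0" using du by (metis inner_zero_left inner_gt_zero_iff)
    define c where "c = 2 * (d \<bullet> u) / (d \<bullet> d)"
    have c0: "c \<noteq> 0" using du dd by (simp add: c_def)
    define v where "v = u - c *\<^sub>R d"
    have vv: "v \<bullet> v = u \<bullet> u - 2 * c * (d \<bullet> u) + c^2 * (d \<bullet> d)"
      by (simp add: v_def inner_diff_left inner_diff_right inner_commute power2_eq_square algebra_simps)
    have zero: "2 * c * (d \<bullet> u) = c^2 * (d \<bullet> d)"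
      using dd by (simp add: c_def power2_eq_square field_simps)
    have "v \<bullet> v = g\<^sup>2" using uu vv zero by simp
    then have "norm v = g" using gpos by (simp add: norm_eq_sqrt_inner)
    moreover have "P *v v = v" by (simp add: v_def matrix_vector_mult_diff_distrib matrix_vector_mult_scaleR Pu Pd)
    ultimately have vS: "v \<in> S" by (simp add: S_def)
    have "0 \<le> f v - f u" using umin[OF vS] by simp
    also have "\<dots> = (1/2) * c^2 * (d \<bullet> (M *v d) - l * (d \<bullet> d))"
      unfolding I2[OF vS] by (simp add: v_def matrix_vector_mult_scaleR mvneg power2_eq_square algebra_simps)
    finally show ?thesis using c0 by (simp add: zero_le_mult_iff)
  qed
  show ?thesis
  proof (rule that[OF LG])
    fix \<mu> s assume snz: "s \<noteq> 0" and Ps: "P *v s = s" and Ms: "M *v s = \<mu> *\<^sub>R s"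
    have ss: "s \<bullet> s > 0" using snz by simp
    show "l \<le> \<mu>"
    proof (cases "s \<bullet> u = 0")
      case False
      have "0 \<le> s \<bullet> (M *v s) - l * (s \<bullet> s)" by (rule q_nonneg[OF Ps False])
      also have "\<dots> = (\<mu> - l) * (s \<bullet> s)" by (simp add: Ms algebra_simps)
      finally show ?thesis using ss by (simp add: zero_le_mult_iff)
    next
      case True
      define Cq where "Cq = u \<bullet> (M *v u) - l * (u \<bullet> u)"
      have key: "0 \<le> (\<mu> - l) * (s \<bullet> s) + \<epsilon>^2 * Cq" if e0: "\<epsilon> \<noteq> 0" for \<epsilon>
      proof -
        define d where "d = s + \<epsilon> *\<^sub>R u"
        have Pd: "P *v d = d" by (simp add: d_def matrix_vector_right_distrib matrix_vector_mult_scaleR Ps Pu)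
        have "d \<bullet> u = \<epsilon> * g\<^sup>2" using True by (simp add: d_def inner_add_left uu)
        then have du: "d \<bullet> u \<noteq> 0" using e0 gpos by simp
        have sMu: "s \<bullet> (M *v u) = 0" using True by (metis Minner Ms inner_scaleR_left mult_zero_right)
        have uMs: "u \<bullet> (M *v s) = 0" using True by (simp add: Ms inner_commute)
        have "0 \<le> d \<bullet> (M *v d) - l * (d \<bullet> d)" by (rule q_nonneg[OF Pd du])
        also have "\<dots> = (\<mu> - l) * (s \<bullet> s) + \<epsilon>^2 * Cq"
          using True by (simp add: d_def Cq_def matrix_vector_right_distrib matrix_vector_mult_scaleR
              inner_add_left inner_add_right sMu uMs inner_commute power2_eq_square algebra_simps Ms)
        finally show ?thesis .
      qed
      show ?thesis
      proof (rule ccontr)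
        assume "\<not> l \<le> \<mu>"
        then have a: "(l - \<mu>) * (s \<bullet> s) > 0" using ss by simp
        define \<epsilon> where "\<epsilon> = sqrt ((l - \<mu>) * (s \<bullet> s) / (2 * (\<bar>Cq\<bar> + 1)))"
        have e2: "\<epsilon>^2 = (l - \<mu>) * (s \<bullet> s) / (2 * (\<bar>Cq\<bar> + 1))"
          using a unfolding \<epsilon>_def by (simp add: add_pos_nonneg less_imp_le)
        have e0: "\<epsilon> \<noteq> 0"
        proof -
          have "(l - \<mu>) * (s \<bullet> s) / (2 * (\<bar>Cq\<bar> + 1)) > 0" using a by (simp add: add_pos_nonneg)
          then have "\<epsilon> > 0" unfolding \<epsilon>_def by (rule real_sqrt_gt_zero)
          then show ?thesis by simp
        qed
        have "\<epsilon>^2 * Cq \<le> \<epsilon>^2 * \<bar>Cq\<bar>" by (simp add: mult_left_mono)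
        also have "\<dots> < (l - \<mu>) * (s \<bullet> s)"
        proof -
          have "\<epsilon>^2 * \<bar>Cq\<bar> = (l - \<mu>) * (s \<bullet> s) * (\<bar>Cq\<bar> / (2 * (\<bar>Cq\<bar> + 1)))"
            by (simp add: e2)
          also have "\<dots> < (l - \<mu>) * (s \<bullet> s) * 1"
            using a by (intro mult_strict_left_mono) (auto simp: field_simps)
          finally show ?thesis by simp
        qed
        finally show False using key[OF e0] by (simp add: algebra_simps)
      qed
    qed
  qed
qed

definition LGmin where "LGmin l u \<longleftrightarrow> LGf l u \<and> (\<forall>l' u'. LGf l' u' \<longrightarrow> l \<le> l')"
definition QEPmin where "QEPmin l z \<longleftrightarrow> QEPf l z \<and> (\<forall>l' z'. QEPf l' z' \<longrightarrow> l \<le> l')"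

lemma LGf_QEP: assumes "LGf l u" shows "\<exists>z. QEPf l z"
  using F2a[OF assms] F2b[OF assms] by blast

lemma QEP_lower:
  assumes L: "LGmin l u" and Q: "QEPf l' z'"
  shows "l \<le> l'"
proof -
  obtain lg ug where LG: "LGf lg ug" and eb: "\<And>\<mu> s. s \<noteq> 0 \<Longrightarrow> P *v s = s \<Longrightarrow> M *v s = \<mu> *\<^sub>R s \<Longrightarrow> lg \<le> \<mu>"
    using trs_exists by blast
  show ?thesis
  proof (cases "b0 \<bullet> z' = 0")
    case False
    then show ?thesis using F1[OF Q False] L unfolding LGmin_def by blast
  next
    case True
    have "X l' *v z' = 0" by (rule F3[OF Q True])
    then have "M *v z' = l' *\<^sub>R z'" by (simp add: Xv)
    then have "lg \<le> l'" using eb Q unfolding QEPf_def by blast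
    moreover have "l \<le> lg" using L LG unfolding LGmin_def by blast
    ultimately show ?thesis by simp
  qed
qed

lemma part1:
  assumes L: "LGmin l u"
  shows "(\<exists>z. QEPmin l z) \<and>
    (\<not> (\<exists>s. s \<noteq> 0 \<and> P *v s = s \<and> M *v s = l *\<^sub>R s) \<longrightarrow> QEPmin l (mp_pinv (X l) *v u)) \<and>
    (\<forall>s. s \<noteq> 0 \<and> P *v s = s \<and> M *v s = l *\<^sub>R s \<longrightarrow> QEPmin l s)"
proof -
  have LG: "LGf l u" using L unfolding LGmin_def by blast
  have low: "\<forall>l' z'. QEPf l' z' \<longrightarrow> l \<le> l'" using QEP_lower[OF L] by blast
  show ?thesis
    using LGf_QEP[OF LG] F2b[OF LG] F2a[OF LG] low unfolding QEPmin_def by blast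
qed

lemma part2:
  assumes Q: "QEPmin l z"
  shows "(\<exists>u. LGmin l u) \<and>
    (b0 \<bullet> z \<noteq> 0 \<longrightarrow> LGmin l (- ((g\<^sup>2) / (b0 \<bullet> z)) *\<^sub>R (X l *v z))) \<and>
    (b0 \<bullet> z = 0 \<longrightarrow> (let x = - (mp_pinv (X l) *v b0) in norm x \<le> g \<and>
        LGmin l (x + sqrt (g\<^sup>2 - (norm x)\<^sup>2) *\<^sub>R ((1 / norm z) *\<^sub>R z))))"
proof -
  have Qf: "QEPf l z" using Q unfolding QEPmin_def by blast
  have low: "l \<le> l'" if "LGf l' u'" for l' u'
    using LGf_QEP[OF that] Q unfolding QEPmin_def by blast
  show ?thesis
  proof (cases "b0 \<bullet> z = 0")
    case False
    have "LGmin l (- ((g\<^sup>2) / (b0 \<bullet> z)) *\<^sub>R (X l *v z))"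
      using F1[OF Qf False] low unfolding LGmin_def by blast
    then show ?thesis using False by blast
  next
    case True
    obtain lg ug where LG: "LGf lg ug" and eb: "\<And>\<mu> s. s \<noteq> 0 \<Longrightarrow> P *v s = s \<Longrightarrow> M *v s = \<mu> *\<^sub>R s \<Longrightarrow> lg \<le> \<mu>"
      using trs_exists by blast
    have Xz: "X l *v z = 0" by (rule F3[OF Qf True])
    have znz: "z \<noteq> 0" and Pz: "P *v z = z" using Qf unfolding QEPf_def by auto
    have "M *v z = l *\<^sub>R z" using Xz by (simp add: Xv)
    then have "lg \<le> l" using eb znz Pz by blast
    moreover have "l \<le> lg" using low[OF LG] .
    ultimately have "lg = l" by simp
    with LG have LGl: "LGf l ug" by simp
    have Xu: "X l *v ug = - b0" and nu: "norm ug = g" and Pu: "P *v ug = ug"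
      using LGl unfolding LGf_def by auto
    define x where "x = - (mp_pinv (X l) *v b0)"
    have xorth: "x \<bullet> k = 0" if "X l *v k = 0" for k
      using pinv_vec(2)[OF Xsym that, of b0] by (simp add: x_def)
    have Xx: "X l *v x = - b0"
    proof -
      have "X l *v x = - (X l *v (mp_pinv (X l) *v (X l *v (- ug))))"
        using Xu by (simp add: x_def mvneg)
      also have "\<dots> = - b0" using pinv_vec(1)[OF Xsym, of l "- ug"] by (simp add: mvneg Xu)
      finally show ?thesis .
    qed
    have Px: "P *v x = x"
    proof (rule minnorm[of l])
      show "X l *v (P *v x - x) = 0"
        by (simp add: matrix_vector_mult_diff_distrib XP Xx mvneg Pb0)
      show "x \<bullet> k = 0" if "X l *v k = 0" for k using xorth[OF that] .
    qed
    have nx: "(norm x)\<^sup>2 \<le> g\<^sup>2"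
    proof -
      have k: "X l *v (ug - x) = 0" by (simp add: matrix_vector_mult_diff_distrib Xu Xx)
      have "ug = x + (ug - x)" by simp
      then have "ug \<bullet> ug = x \<bullet> x + (ug - x) \<bullet> (ug - x)"
        using xorth[OF k] by (metis (no_types, lifting) inner_add_left inner_add_right inner_commute add.assoc add.right_neutral)
      then show ?thesis using nu by (simp add: power2_norm_eq_inner[symmetric])
    qed
    then have nxg: "norm x \<le> g" using gpos by (simp add: power2_le_iff_abs_le less_imp_le)
    define c where "c = sqrt (g\<^sup>2 - (norm x)\<^sup>2)"
    define zh where "zh = (1 / norm z) *\<^sub>R z"
    define u where "u = x + c *\<^sub>R zh"
    have Xzh: "X l *v zh = 0" by (simp add: zh_def matrix_vector_mult_scaleR Xz)
    have xzh: "x \<bullet> zh = 0" by (rule xorth[OF Xzh])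
    have zhzh: "zh \<bullet> zh = 1" using znz by (simp add: zh_def power2_norm_eq_inner[symmetric] power2_eq_square)
    have c2: "c^2 = g\<^sup>2 - (norm x)\<^sup>2" unfolding c_def using nx by simp
    have "X l *v u = - b0" by (simp add: u_def matrix_vector_right_distrib matrix_vector_mult_scaleR Xx Xzh)
    moreover have "norm u = g"
    proof -
      have "u \<bullet> u = x \<bullet> x + c^2 * (zh \<bullet> zh)"
        using xzh by (simp add: u_def inner_add_left inner_add_right inner_commute power2_eq_square)
      also have "\<dots> = g\<^sup>2" using c2 zhzh by (simp add: power2_norm_eq_inner)
      finally show ?thesis using gpos by (simp add: norm_eq_sqrt_inner)
    qed
    moreover have "P *v u = u"
      by (simp add: u_def zh_def matrix_vector_right_distrib matrix_vector_mult_scaleR Px Pz)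
    ultimately have "LGf l u" unfolding LGf_def by simp
    then have LGm: "LGmin l u" using low unfolding LGmin_def by blast
    have "(let x = - (mp_pinv (X l) *v b0) in norm x \<le> g \<and>
        LGmin l (x + sqrt (g\<^sup>2 - (norm x)\<^sup>2) *\<^sub>R ((1 / norm z) *\<^sub>R z)))"
      using LGm nxg unfolding Let_def x_def[symmetric] u_def c_def zh_def by simp
    then show ?thesis using True LGm by blast
  qed
qed

end



declare transpose_matrix_vector[simp del]

lemma inner_transpose: "(x::real^'m) \<bullet> (transpose A *v y) = ((A::real^'m^'n) *v x) \<bullet> y"
  by (metis dot_lmul_matrix transpose_matrix_vector inner_commute)

theorem theorem2p8:
  fixes A :: "real^'n^'n" and C :: "real^'m^'n" and b :: "real^'m"
  assumes symA: "transpose A = A"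
    and mn: "CARD('m) < CARD('n)"
    and rankC: "rank C = CARD('m)"
    and n0: "norm (nvec C b) < 1"
    and b0: "bvec A C b \<noteq> 0"
  shows
    "(\<forall>lam u. LG_min A C b lam u \<longrightarrow>
        (\<exists>z. QEP_min A C b lam z) \<and>
        ((\<not> (\<exists>s. s \<noteq> 0 \<and> s \<in> nullT C \<and> PAP A C *v s = lam *\<^sub>R s)) \<longrightarrow>
            QEP_min A C b lam (mp_pinv (PAP A C - mat lam) *v u)) \<and>
        (\<forall>s. lam \<in> eig (PAP A C) \<and> s \<noteq> 0 \<and> s \<in> nullT C \<and> PAP A C *v s = lam *\<^sub>R s \<longrightarrow>
            QEP_min A C b lam s))
   \<and>
    (\<forall>lam z. QEP_min A C b lam z \<longrightarrow>
        (\<exists>u. LG_min A C b lam u) \<and>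
        (bvec A C b \<bullet> z \<noteq> 0 \<longrightarrow>
            LG_min A C b lam
              (- ((gam C b)\<^sup>2 / (bvec A C b \<bullet> z)) *\<^sub>R ((PAP A C - mat lam) *v z))) \<and>
        (bvec A C b \<bullet> z = 0 \<longrightarrow>
            (let x = - (mp_pinv (PAP A C - mat lam) *v bvec A C b) in
               norm x \<le> gam C b \<and>
               LG_min A C b lam
                 (x + sqrt ((gam C b)\<^sup>2 - (norm x)\<^sup>2) *\<^sub>R ((1 / norm z) *\<^sub>R z)))))"
proof -
  define G where "G = transpose C ** C"
  define Gi where "Gi = matrix_inv G"
  define P where "P = projP C"
  have injC: "inj ((*v) C)" using rankC full_rank_injective by blast
  have Gker: "\<forall>x. G *v x = 0 \<longrightarrow> x = 0"
  proof (intro allI impI)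
    fix x assume "G *v x = 0"
    then have "x \<bullet> (transpose C *v (C *v x)) = 0" by (simp add: G_def matrix_vector_mul_assoc)
    then have "(C *v x) \<bullet> (C *v x) = 0" by (simp only: inner_transpose)
    then have "C *v x = C *v 0" by simp
    then show "x = 0" using injC by (metis injD)
  qed
  then obtain B where "B ** G = mat 1" using matrix_left_invertible_ker by blast
  then have "invertible G" using invertible_left_inverse by blast
  then have GGi: "G ** Gi = mat 1 \<and> Gi ** G = mat 1"
    unfolding invertible_def matrix_inv_def Gi_def by (rule someI_ex)
  have sG: "transpose G = G" by (simp add: G_def matrix_transpose_mul)
  have sGi: "transpose Gi = Gi"
  proof -
    have "transpose Gi ** G = mat 1"
      using GGi sG by (metis matrix_transpose_mul transpose_mat)
    then have "transpose Gi = transpose Gi ** (G ** Gi)" using GGi by simp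
    also have "\<dots> = Gi" using \<open>transpose Gi ** G = mat 1\<close> by (simp add: matrix_mul_assoc)
    finally show ?thesis .
  qed
  have GiG: "Gi *v (G *v x) = x" for x using GGi by (metis matrix_vector_mul_assoc matrix_vector_mul_lid)
  have GGiv: "G *v (Gi *v x) = x" for x using GGi by (metis matrix_vector_mul_assoc matrix_vector_mul_lid)
  have Pv: "P *v x = x - C *v (Gi *v (transpose C *v x))" for x
    by (simp add: P_def projP_def Gi_def G_def matrix_vector_mult_diff_rdistrib matrix_vector_mul_assoc[symmetric])
  have Psym: "transpose P = P"
  proof (rule inner_sym)
    fix x y
    have "x \<bullet> (C *v (Gi *v (transpose C *v y))) = (transpose C *v x) \<bullet> (Gi *v (transpose C *v y))"
      by (metis inner_transpose inner_commute)
    also have "\<dots> = (Gi *v (transpose C *v x)) \<bullet> (transpose C *v y)" by (rule sym_inner[OF sGi])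
    also have "\<dots> = (C *v (Gi *v (transpose C *v x))) \<bullet> y" by (metis inner_transpose)
    finally show "x \<bullet> (P *v y) = (P *v x) \<bullet> y"
      by (simp add: Pv inner_diff_left inner_diff_right inner_commute)
  qed
  have CtP: "transpose C *v (P *v x) = 0" for x
  proof -
    have "transpose C *v (C *v (Gi *v (transpose C *v x))) = G *v (Gi *v (transpose C *v x))"
      by (simp add: G_def matrix_vector_mul_assoc[symmetric])
    then show ?thesis by (simp add: Pv matrix_vector_mult_diff_distrib GGiv)
  qed
  have PPv: "P *v (P *v x) = P *v x" for x
    using CtP[of x] by (simp add: Pv[of "P *v x"])
  have Pidem: "P ** P = P" by (simp add: matrix_eq matrix_vector_mul_assoc[symmetric] PPv)
  have nullP: "nullT C = {x. P *v x = x}"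
  proof (intro set_eqI iffI)
    fix x assume "x \<in> nullT C" then show "x \<in> {x. P *v x = x}" by (simp add: nullT_def Pv)
  next
    fix x assume "x \<in> {x. P *v x = x}"
    then have "transpose C *v (P *v x) = transpose C *v x" by simp
    then show "x \<in> nullT C" using CtP by (simp add: nullT_def)
  qed
  define M where "M = PAP A C"
  have MPAP: "M = P ** A ** P" by (simp add: M_def PAP_def P_def)
  have Msym: "transpose M = M" by (simp add: MPAP matrix_transpose_mul Psym symA matrix_mul_assoc)
  have PM: "P ** M = M" by (simp add: MPAP matrix_mul_assoc Pidem)
  have MP: "M ** P = M" by (simp add: MPAP matrix_mul_assoc[symmetric] Pidem)
  define b0 where "b0 = bvec A C b"
  have Pb0: "P *v b0 = b0" by (simp add: b0_def bvec_def P_def[symmetric] PPv)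
  define g where "g = gam C b"
  have gpos: "g > 0"
  proof -
    have "(norm (nvec C b))\<^sup>2 < 1" using n0 by (simp add: power_less_one_iff abs_square_less_1)
    then show ?thesis by (simp add: g_def gam_def)
  qed
  interpret T: trs P M b0 g
    by unfold_locales (use Psym Pidem Msym PM MP Pb0 b0 gpos b0_def in auto)
  have XX: "T.X l = PAP A C - mat l" for l unfolding T.X_def by (simp add: M_def)
  have LGeq: "LG_feasible A C b = T.LGf"
    by (intro ext) (unfold T.LGf_def, simp add: LG_feasible_def XX b0_def g_def nullP)
  have QEPeq: "QEP_feasible A C b = T.QEPf"
    by (intro ext) (unfold T.QEPf_def, simp add: QEP_feasible_def XX b0_def g_def nullP)
  have LGm: "LG_min A C b = T.LGmin"
    by (intro ext) (unfold T.LGmin_def, simp add: LG_min_def LGeq)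
  have QEPm: "QEP_min A C b = T.QEPmin"
    by (intro ext) (unfold T.QEPmin_def, simp add: QEP_min_def QEPeq)
  show ?thesis
    unfolding LGm QEPm b0_def[symmetric] g_def[symmetric] M_def[symmetric] nullP
    using T.part1[unfolded T.X_def] T.part2[unfolded T.X_def] by auto
qed

end
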